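(* In the contextual bandit setting below, let $\hat\rho:\mathcal{A}\times\mathcal{X}\to\mathbb{R}$ and $\hat w:\mathbb{R}\to\mathbb{R}$ be fixed functions, let $(x_i,a_i,y_i)_{i=1}^n$ be i.i.d. from $p_{\pi^b}$, and define $\hat\theta_{\mathrm{IPW}}=\frac1n\sum_i\hat\rho(a_i,x_i)y_i$ and $\hat\theta_{\mathrm{MR}}=\frac1n\sum_i\hat w(y_i)y_i$. Let $\tilde w(Y)=\mathbb{E}_{\pi^b}[\hat\rho(A,X)\mid Y]$ and $\epsilon=\hat w(Y)-\tilde w(Y)$. Then, with $\mathrm{Bias}(\hat\theta)=\mathbb{E}_{\pi^b}[\hat\theta]-\mathbb{E}_{\pi^*}[Y]$, $$\mathrm{Bias}(\hat\theta_{\mathrm{MR}})-\mathrm{Bias}(\hat\theta_{\mathrm{IPW}})=\mathbb{E}_{\pi^b}[\epsilon Y],$$ and $$\mathbb{V}_{\pi^b}[\hat\theta_{\mathrm{IPW}}]-\mathbb{V}_{\pi^b}[\hat\theta_{\mathrm{MR}}]=\frac1n\Big(\mathbb{E}_{\pi^b}\big[\mathbb{V}_{\pi^b}[\hat\rho(A,X)Y\mid Y]\big]-\mathbb{V}_{\pi^b}[\epsilon Y]-2\,\mathrm{Cov}(\tilde w(Y)Y,\epsilon Y)\Big).$$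
   Context: Setting: context $X\in\mathcal{X}$, action $A\in\mathcal{A}$, real outcome $Y$; $p(x)$ context density, $p(y\mid x,a)$ outcome density; behaviour policy $\pi^b$ and target policy $\pi^*$ with $\pi^*(a\mid x)>0\Rightarrow \pi^b(a\mid x)>0$; $p_{\pi}(x,a,y)=p(y\mid x,a)\pi(a\mid x)p(x)$. $\mathbb{E}_{\pi},\mathbb{V}_{\pi}$ denote expectation/variance under $p_{\pi}$; covariance is under $p_{\pi^b}$. *)

theory Defs
  imports "HOL-Probability.Probability"
begin

text \<open>Joint law p_pi(x,a,y) = p(y|x,a) pi(a|x) p(x) of (context, action, outcome),
  as a density w.r.t. MX x MA x Lebesgue, with points written (x, a, y).\<close>
definition pol_measure ::
  "'x measure \<Rightarrow> 'a measure \<Rightarrow> ('x \<Rightarrow> real) \<Rightarrow> ('x \<Rightarrow> 'a \<Rightarrow> real \<Rightarrow> real)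
     \<Rightarrow> ('a \<Rightarrow> 'x \<Rightarrow> real) \<Rightarrow> ('x \<times> 'a \<times> real) measure" where
  "pol_measure MX MA px py pol =
     density (MX \<Otimes>\<^sub>M MA \<Otimes>\<^sub>M lborel) (\<lambda>(x, a, y). ennreal (py x a y * pol a x * px x))"

definition var_of :: "'b measure \<Rightarrow> ('b \<Rightarrow> real) \<Rightarrow> real" where
  "var_of M f = (\<integral>z. (f z - (\<integral>z. f z \<partial>M))\<^sup>2 \<partial>M)"

definition cov_of :: "'b measure \<Rightarrow> ('b \<Rightarrow> real) \<Rightarrow> ('b \<Rightarrow> real) \<Rightarrow> real" where
  "cov_of M f g = (\<integral>z. (f z - (\<integral>z. f z \<partial>M)) * (g z - (\<integral>z. g z \<partial>M)) \<partial>M)"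

definition cond_var_of :: "'b measure \<Rightarrow> 'b measure \<Rightarrow> ('b \<Rightarrow> real) \<Rightarrow> 'b \<Rightarrow> real" where
  "cond_var_of M F f = real_cond_exp M F (\<lambda>z. (f z - real_cond_exp M F f z)\<^sup>2)"

end

theory Submission
  imports Defs
begin


lemma pol_prob:
  fixes MX :: "'x measure" and MA :: "'a measure"
  assumes sfX: "sigma_finite_measure MX" and sfA: "sigma_finite_measure MA"
    and px_meas: "px \<in> borel_measurable MX"
    and px_nn: "\<And>x. x \<in> space MX \<Longrightarrow> px x \<ge> 0"
    and px_norm: "(\<integral>\<^sup>+ x. ennreal (px x) \<partial>MX) = 1"
    and py_meas: "(\<lambda>(x, a, y). py x a y) \<in> borel_measurable (MX \<Otimes>\<^sub>M MA \<Otimes>\<^sub>M borel)"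
    and py_nn: "\<And>x a y. x \<in> space MX \<Longrightarrow> a \<in> space MA \<Longrightarrow> py x a y \<ge> 0"
    and py_norm: "\<And>x a. x \<in> space MX \<Longrightarrow> a \<in> space MA \<Longrightarrow> (\<integral>\<^sup>+ y. ennreal (py x a y) \<partial>lborel) = 1"
    and pib_meas: "(\<lambda>(a, x). pib a x) \<in> borel_measurable (MA \<Otimes>\<^sub>M MX)"
    and pib_nn: "\<And>a x. a \<in> space MA \<Longrightarrow> x \<in> space MX \<Longrightarrow> pib a x \<ge> 0"
    and pib_norm: "\<And>x. x \<in> space MX \<Longrightarrow> (\<integral>\<^sup>+ a. ennreal (pib a x) \<partial>MA) = 1"
  shows "prob_space (pol_measure MX MA px py pib)"
proof -
  interpret X: sigma_finite_measure MX by fact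
  interpret A: sigma_finite_measure MA by fact
  interpret AL: pair_sigma_finite MA lborel
    by (simp add: pair_sigma_finite_def sfA lborel.sigma_finite_measure_axioms)
  let ?d = "\<lambda>(x, a, y). ennreal (py x a y * pib a x * px x)"
  have pym: "(\<lambda>(x, a, y). py x a y) \<in> borel_measurable (MX \<Otimes>\<^sub>M MA \<Otimes>\<^sub>M lborel)"
    using py_meas by (simp cong: measurable_cong_sets)
  have pibm: "(\<lambda>(x, a, y::real). pib a x) \<in> borel_measurable (MX \<Otimes>\<^sub>M MA \<Otimes>\<^sub>M lborel)"
  proof -
    have "(\<lambda>(x, a, y::real). (a, x)) \<in> measurable (MX \<Otimes>\<^sub>M MA \<Otimes>\<^sub>M lborel) (MA \<Otimes>\<^sub>M MX)"
      by measurable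
    from measurable_comp[OF this pib_meas] show ?thesis by (simp add: o_def case_prod_beta)
  qed
  have pxm: "(\<lambda>(x, a, y::real). px x) \<in> borel_measurable (MX \<Otimes>\<^sub>M MA \<Otimes>\<^sub>M lborel)"
    using px_meas by (simp add: case_prod_beta)
  have dm: "?d \<in> borel_measurable (MX \<Otimes>\<^sub>M MA \<Otimes>\<^sub>M lborel)"
  proof -
    have "(\<lambda>z. (case z of (x, a, y) \<Rightarrow> py x a y) * (case z of (x, a, y::real) \<Rightarrow> pib a x) * (case z of (x, a, y) \<Rightarrow> px x))
       \<in> borel_measurable (MX \<Otimes>\<^sub>M MA \<Otimes>\<^sub>M lborel)"
      using pym pibm pxm by measurable
    then show ?thesis by (simp add: case_prod_beta)
  qed
  have inner: "(\<integral>\<^sup>+ y. ennreal (py x a y * pib a x * px x) \<partial>lborel) = ennreal (pib a x * px x)"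
    if x: "x \<in> space MX" and a: "a \<in> space MA" for x a
  proof -
    have "(\<integral>\<^sup>+ y. ennreal (py x a y * pib a x * px x) \<partial>lborel)
        = (\<integral>\<^sup>+ y. ennreal (pib a x * px x) * ennreal (py x a y) \<partial>lborel)"
      using x a py_nn pib_nn px_nn by (intro nn_integral_cong) (simp add: ennreal_mult'[symmetric] mult_ac)
    also have "\<dots> = ennreal (pib a x * px x) * (\<integral>\<^sup>+ y. ennreal (py x a y) \<partial>lborel)"
      by (rule nn_integral_cmult) (use x a py_meas in simp)
    also have "\<dots> = ennreal (pib a x * px x)" using py_norm[OF x a] by simp
    finally show ?thesis .
  qed
  have mid: "(\<integral>\<^sup>+ a. ennreal (pib a x * px x) \<partial>MA) = ennreal (px x)" if x: "x \<in> space MX" for x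
  proof -
    have "(\<integral>\<^sup>+ a. ennreal (pib a x * px x) \<partial>MA) = (\<integral>\<^sup>+ a. ennreal (px x) * ennreal (pib a x) \<partial>MA)"
      using x pib_nn px_nn by (intro nn_integral_cong) (simp add: ennreal_mult'[symmetric] mult_ac)
    also have "\<dots> = ennreal (px x) * (\<integral>\<^sup>+ a. ennreal (pib a x) \<partial>MA)"
      by (rule nn_integral_cmult) (use x pib_meas in simp)
    also have "\<dots> = ennreal (px x)" using pib_norm[OF x] by simp
    finally show ?thesis .
  qed
  have "emeasure (pol_measure MX MA px py pib) (space (pol_measure MX MA px py pib)) = integral\<^sup>N (MX \<Otimes>\<^sub>M MA \<Otimes>\<^sub>M lborel) ?d"
  proof -
    have "emeasure (density (MX \<Otimes>\<^sub>M MA \<Otimes>\<^sub>M lborel) ?d) (space (MX \<Otimes>\<^sub>M MA \<Otimes>\<^sub>M lborel))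
       = (\<integral>\<^sup>+ z. ?d z * indicator (space (MX \<Otimes>\<^sub>M MA \<Otimes>\<^sub>M lborel)) z \<partial>(MX \<Otimes>\<^sub>M MA \<Otimes>\<^sub>M lborel))"
      by (rule emeasure_density[OF dm]) (rule sets.top)
    also have "\<dots> = integral\<^sup>N (MX \<Otimes>\<^sub>M MA \<Otimes>\<^sub>M lborel) ?d"
      by (rule nn_integral_cong) simp
    finally show ?thesis unfolding pol_measure_def space_density .
  qed
  also have "\<dots> = (\<integral>\<^sup>+ x. \<integral>\<^sup>+ ay. ?d (x, ay) \<partial>(MA \<Otimes>\<^sub>M lborel) \<partial>MX)"
    by (rule AL.nn_integral_fst[symmetric]) (fact dm)
  also have "\<dots> = (\<integral>\<^sup>+ x. ennreal (px x) \<partial>MX)"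
  proof (rule nn_integral_cong)
    fix x assume x: "x \<in> space MX"
    have dm2: "(\<lambda>ay. ?d (x, ay)) \<in> borel_measurable (MA \<Otimes>\<^sub>M lborel)"
      using dm x by measurable
    have "(\<integral>\<^sup>+ ay. ?d (x, ay) \<partial>(MA \<Otimes>\<^sub>M lborel)) = (\<integral>\<^sup>+ a. \<integral>\<^sup>+ y. ?d (x, a, y) \<partial>lborel \<partial>MA)"
      using lborel.nn_integral_fst[OF dm2] by simp
    also have "\<dots> = (\<integral>\<^sup>+ a. ennreal (pib a x * px x) \<partial>MA)"
      by (intro nn_integral_cong) (simp add: inner x)
    also have "\<dots> = ennreal (px x)" by (rule mid[OF x])
    finally show "(\<integral>\<^sup>+ ay. ?d (x, ay) \<partial>(MA \<Otimes>\<^sub>M lborel)) = ennreal (px x)" .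
  qed
  also have "\<dots> = 1" by (rule px_norm)
  finally show ?thesis by (rule prob_spaceI)
qed



lemma iid_mean_var:
  fixes M :: "'b measure" and f :: "'b \<Rightarrow> real" and n :: nat
  assumes pM: "prob_space M" and fm[measurable]: "f \<in> borel_measurable M"
    and f2: "integrable M (\<lambda>z. (f z)\<^sup>2)" and n: "n > 0"
  shows "(\<integral>s. (\<Sum>i<n. f (s i)) / real n \<partial>PiM {..<n} (\<lambda>_. M)) = (\<integral>z. f z \<partial>M)"
    and "var_of (PiM {..<n} (\<lambda>_. M)) (\<lambda>s. (\<Sum>i<n. f (s i)) / real n) = var_of M f / real n"
proof -
  interpret M: prob_space M by fact
  interpret PS: product_sigma_finite "\<lambda>_. M"
    by (simp add: product_sigma_finite_def M.sigma_finite_measure_axioms)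
  interpret P: prob_space "PiM {..<n} (\<lambda>_. M)"
    by (rule prob_space_PiM) (simp add: pM)
  let ?P = "PiM {..<n} (\<lambda>_. M)"
  have fi: "integrable M f" by (rule M.square_integrable_imp_integrable[OF fm f2])
  define mu where "mu = (\<integral>z. f z \<partial>M)"
  define d where "d = (\<lambda>z. f z - mu)"
  have di: "integrable M d" unfolding d_def using fi by simp
  have dm[measurable]: "d \<in> borel_measurable M" unfolding d_def by simp
  have d0: "(\<integral>z. d z \<partial>M) = 0" unfolding d_def mu_def using fi by (simp add: M.prob_space)
  have dd: "integrable M (\<lambda>z. d z * d z)"
    unfolding d_def using fi f2 by (simp add: algebra_simps power2_eq_square)
  define V where "V = (\<integral>z. d z * d z \<partial>M)"
  have V: "var_of M f = V" unfolding var_of_def V_def d_def mu_def by (simp add: power2_eq_square)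
  have comp: "integrable ?P (\<lambda>s. g (s i)) \<and> (\<integral>s. g (s i) \<partial>?P) = (\<integral>z. g z \<partial>M)"
    if gi: "integrable M g" and i: "i < n" for g :: "'b \<Rightarrow> real" and i
  proof -
    let ?G = "\<lambda>k. if k = i then g else (\<lambda>_. 1::real)"
    have e: "(\<lambda>s. \<Prod>k\<in>{..<n}. ?G k (s k)) = (\<lambda>s. g (s i))"
    proof
      fix s
      have "(\<Prod>k\<in>{..<n}. ?G k (s k)) = (\<Prod>k\<in>{i}. ?G k (s k))"
        by (rule prod.mono_neutral_right) (use i in auto)
      then show "(\<Prod>k\<in>{..<n}. ?G k (s k)) = g (s i)" by simp
    qed
    have "integrable ?P (\<lambda>s. \<Prod>k\<in>{..<n}. ?G k (s k))"
      by (rule PS.product_integrable_prod) (auto simp: gi)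
    moreover have "(\<integral>s. (\<Prod>k\<in>{..<n}. ?G k (s k)) \<partial>?P) = (\<Prod>k\<in>{..<n}. integral\<^sup>L M (?G k))"
      by (rule PS.product_integral_prod) (auto simp: gi)
    moreover have "(\<Prod>k\<in>{..<n}. integral\<^sup>L M (?G k)) = (\<integral>z. g z \<partial>M)"
      using i by (simp add: if_distrib M.prob_space cong: if_cong)
    ultimately show ?thesis unfolding e by simp
  qed
  have pair: "integrable ?P (\<lambda>s. d (s i) * d (s j)) \<and> (\<integral>s. d (s i) * d (s j) \<partial>?P) = (if i = j then V else 0)"
    if i: "i < n" and j: "j < n" for i j
  proof (cases "i = j")
    case True
    then show ?thesis using comp[OF dd i] by (simp add: V_def)
  next
    case False
    let ?G = "\<lambda>k. if k = i then d else if k = j then d else (\<lambda>_. 1::real)"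
    have e: "(\<lambda>s. \<Prod>k\<in>{..<n}. ?G k (s k)) = (\<lambda>s. d (s i) * d (s j))"
    proof
      fix s
      have "(\<Prod>k\<in>{..<n}. ?G k (s k)) = (\<Prod>k\<in>{i,j}. ?G k (s k))"
        by (rule prod.mono_neutral_right) (use i j in auto)
      also have "\<dots> = d (s i) * d (s j)" using False by simp
      finally show "(\<Prod>k\<in>{..<n}. ?G k (s k)) = d (s i) * d (s j)" .
    qed
    have "integrable ?P (\<lambda>s. \<Prod>k\<in>{..<n}. ?G k (s k))"
      by (rule PS.product_integrable_prod) (auto simp: di)
    moreover have "(\<integral>s. (\<Prod>k\<in>{..<n}. ?G k (s k)) \<partial>?P) = (\<Prod>k\<in>{..<n}. integral\<^sup>L M (?G k))"
      by (rule PS.product_integral_prod) (auto simp: di)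
    moreover have "(\<Prod>k\<in>{..<n}. integral\<^sup>L M (?G k)) = 0"
      using i d0 by (intro prod_zero) auto
    ultimately show ?thesis unfolding e using False by simp
  qed
  have th: "(\<lambda>s. (\<Sum>i<n. f (s i)) / real n) = (\<lambda>s. mu + (\<Sum>i<n. d (s i)) / real n)"
    using n by (auto simp: d_def sum_subtractf field_simps)
  have mean: "(\<integral>s. (\<Sum>i<n. f (s i)) / real n \<partial>?P) = mu"
  proof -
    have "(\<integral>s. (\<Sum>i<n. d (s i)) \<partial>?P) = (\<Sum>i<n. \<integral>s. d (s i) \<partial>?P)"
      using comp[OF di] by (simp add: integral_sum)
    also have "\<dots> = 0" using comp[OF di] d0 by simp
    finally have "(\<integral>s. (\<Sum>i<n. d (s i)) \<partial>?P) = 0" .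
    moreover have si: "integrable ?P (\<lambda>s. (\<Sum>i<n. d (s i)))"
      by (intro Bochner_Integration.integrable_sum) (use comp[OF di] in auto)
    moreover have "(\<integral>s. mu + (\<Sum>i<n. d (s i)) / real n \<partial>?P) = (\<integral>s. mu \<partial>?P) + (\<integral>s. (\<Sum>i<n. d (s i)) / real n \<partial>?P)"
      by (rule Bochner_Integration.integral_add) (use si in auto)
    ultimately show ?thesis unfolding th by (simp add: P.prob_space)
  qed
  then show "(\<integral>s. (\<Sum>i<n. f (s i)) / real n \<partial>PiM {..<n} (\<lambda>_. M)) = (\<integral>z. f z \<partial>M)"
    by (simp add: mu_def)
  have "var_of ?P (\<lambda>s. (\<Sum>i<n. f (s i)) / real n)
      = (\<integral>s. (\<Sum>i<n. \<Sum>j<n. d (s i) * d (s j)) / (real n)\<^sup>2 \<partial>?P)"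
    unfolding var_of_def mean
  proof (rule Bochner_Integration.integral_cong)
    fix s
    have "(\<Sum>i<n. f (s i)) / real n - mu = (\<Sum>i<n. d (s i)) / real n"
      using n by (simp add: d_def sum_subtractf field_simps)
    then show "((\<Sum>i<n. f (s i)) / real n - mu)\<^sup>2 = (\<Sum>i<n. \<Sum>j<n. d (s i) * d (s j)) / (real n)\<^sup>2"
      by (simp add: power_divide power2_eq_square sum_product)
  qed simp
  also have "\<dots> = (\<integral>s. (\<Sum>i<n. \<Sum>j<n. d (s i) * d (s j)) \<partial>?P) / (real n)\<^sup>2"
    by simp
  also have "(\<integral>s. (\<Sum>i<n. \<Sum>j<n. d (s i) * d (s j)) \<partial>?P) = real n * V"
  proof -
    have ii: "integrable ?P (\<lambda>s. \<Sum>j<n. d (s i) * d (s j))" if "i < n" for i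
      by (intro Bochner_Integration.integrable_sum) (use pair that in auto)
    have "(\<integral>s. (\<Sum>i<n. \<Sum>j<n. d (s i) * d (s j)) \<partial>?P) = (\<Sum>i<n. \<integral>s. (\<Sum>j<n. d (s i) * d (s j)) \<partial>?P)"
      by (rule Bochner_Integration.integral_sum) (use ii in auto)
    also have "\<dots> = (\<Sum>i<n. \<Sum>j<n. \<integral>s. d (s i) * d (s j) \<partial>?P)"
    proof (rule sum.cong)
      fix i assume "i \<in> {..<n}"
      then show "(\<integral>s. (\<Sum>j<n. d (s i) * d (s j)) \<partial>?P) = (\<Sum>j<n. \<integral>s. d (s i) * d (s j) \<partial>?P)"
        by (intro Bochner_Integration.integral_sum) (use pair in auto)
    qed simp
    also have "\<dots> = (\<Sum>i<n. \<Sum>j<n. if i = j then V else 0)"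
      using pair by simp
    also have "\<dots> = real n * V" by simp
    finally show ?thesis .
  qed
  finally show "var_of (PiM {..<n} (\<lambda>_. M)) (\<lambda>s. (\<Sum>i<n. f (s i)) / real n) = var_of M f / real n"
    using n by (simp add: V power2_eq_square)
qed



lemma sq_bound: "\<bar>(x::real) * y\<bar> \<le> x\<^sup>2 + y\<^sup>2"
proof -
  have "0 \<le> (\<bar>x\<bar> - \<bar>y\<bar>)\<^sup>2" by simp
  then have "2 * (\<bar>x\<bar> * \<bar>y\<bar>) \<le> \<bar>x\<bar>\<^sup>2 + \<bar>y\<bar>\<^sup>2" by (simp add: power2_diff)
  moreover have "0 \<le> \<bar>x\<bar> * \<bar>y\<bar>" by simp
  ultimately show ?thesis unfolding abs_mult power2_abs by linarith
qed

lemma L2_prod: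
  fixes a b :: "'b \<Rightarrow> real"
  assumes [measurable]: "a \<in> borel_measurable M" "b \<in> borel_measurable M"
    and "integrable M (\<lambda>z. (a z)\<^sup>2)" "integrable M (\<lambda>z. (b z)\<^sup>2)"
  shows "integrable M (\<lambda>z. a z * b z)"
proof (rule Bochner_Integration.integrable_bound)
  show "integrable M (\<lambda>z. (a z)\<^sup>2 + (b z)\<^sup>2)" using assms by simp
  show "AE z in M. norm (a z * b z) \<le> norm ((a z)\<^sup>2 + (b z)\<^sup>2)"
    by (rule AE_I2) (simp add: sq_bound)
qed simp

lemma var_alt:
  fixes a :: "'b \<Rightarrow> real"
  assumes "prob_space M" and [measurable]: "a \<in> borel_measurable M" and a2: "integrable M (\<lambda>z. (a z)\<^sup>2)"
  shows "var_of M a = (\<integral>z. (a z)\<^sup>2 \<partial>M) - (\<integral>z. a z \<partial>M)\<^sup>2"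
proof -
  interpret prob_space M by fact
  have ai: "integrable M a" by (rule square_integrable_imp_integrable) (use a2 in auto)
  let ?c = "\<integral>z. a z \<partial>M"
  have "var_of M a = (\<integral>z. (a z)\<^sup>2 - 2 * ?c * a z + ?c\<^sup>2 \<partial>M)"
    unfolding var_of_def by (rule Bochner_Integration.integral_cong) (simp_all add: power2_eq_square algebra_simps)
  also have "\<dots> = (\<integral>z. (a z)\<^sup>2 \<partial>M) - 2 * ?c * ?c + ?c\<^sup>2"
    using ai a2 by (simp add: prob_space)
  finally show ?thesis by (simp add: power2_eq_square)
qed

lemma cov_alt:
  fixes a b :: "'b \<Rightarrow> real"
  assumes "prob_space M" and [measurable]: "a \<in> borel_measurable M" "b \<in> borel_measurable M"
    and a2: "integrable M (\<lambda>z. (a z)\<^sup>2)" and b2: "integrable M (\<lambda>z. (b z)\<^sup>2)"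
  shows "cov_of M a b = (\<integral>z. a z * b z \<partial>M) - (\<integral>z. a z \<partial>M) * (\<integral>z. b z \<partial>M)"
proof -
  interpret prob_space M by fact
  have ai: "integrable M a" by (rule square_integrable_imp_integrable) (use a2 in auto)
  have bi: "integrable M b" by (rule square_integrable_imp_integrable) (use b2 in auto)
  have abi: "integrable M (\<lambda>z. a z * b z)" by (rule L2_prod) (use a2 b2 in auto)
  let ?c = "\<integral>z. a z \<partial>M" and ?d = "\<integral>z. b z \<partial>M"
  have "cov_of M a b = (\<integral>z. a z * b z - ?d * a z - ?c * b z + ?c * ?d \<partial>M)"
    unfolding cov_of_def by (rule Bochner_Integration.integral_cong) (simp_all add: algebra_simps)
  also have "\<dots> = (\<integral>z. a z * b z \<partial>M) - ?d * ?c - ?c * ?d + ?c * ?d"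
    using ai bi abi by (simp add: prob_space)
  finally show ?thesis by simp
qed



lemma cond_part:
  fixes M F :: "'b measure" and R Y W :: "'b \<Rightarrow> real"
  assumes pM: "prob_space M" and sub: "subalgebra M F"
    and YF[measurable]: "Y \<in> borel_measurable F" and WF[measurable]: "W \<in> borel_measurable F"
    and RM[measurable]: "R \<in> borel_measurable M"
    and h2: "integrable M (\<lambda>z. (R z * Y z)\<^sup>2)" and u2: "integrable M (\<lambda>z. (W z * Y z)\<^sup>2)"
  shows "(\<integral>z. (W z - real_cond_exp M F R z) * Y z \<partial>M) = (\<integral>z. W z * Y z \<partial>M) - (\<integral>z. R z * Y z \<partial>M)"
    and "var_of M (\<lambda>z. R z * Y z) - var_of M (\<lambda>z. W z * Y z)
         = (\<integral>z. cond_var_of M F (\<lambda>z. R z * Y z) z \<partial>M)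
           - var_of M (\<lambda>z. (W z - real_cond_exp M F R z) * Y z)
           - 2 * cov_of M (\<lambda>z. real_cond_exp M F R z * Y z) (\<lambda>z. (W z - real_cond_exp M F R z) * Y z)"
proof -
  interpret prob_space M by fact
  interpret S: finite_measure_subalgebra M F
    by (simp add: finite_measure_subalgebra_def finite_measure_subalgebra_axioms_def sub finite_measure_axioms)
  define wt where "wt = real_cond_exp M F R"
  define h where "h = (\<lambda>z. R z * Y z)"
  define k where "k = real_cond_exp M F h"
  define g where "g = (\<lambda>z. wt z * Y z)"
  define u where "u = (\<lambda>z. W z * Y z)"
  define e where "e = (\<lambda>z. (W z - wt z) * Y z)"
  have YM[measurable]: "Y \<in> borel_measurable M" by (rule measurable_from_subalg[OF sub YF])
  have WM[measurable]: "W \<in> borel_measurable M" by (rule measurable_from_subalg[OF sub WF])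
  have wtM[measurable]: "wt \<in> borel_measurable M" unfolding wt_def by simp
  have hM[measurable]: "h \<in> borel_measurable M" unfolding h_def by simp
  have kM[measurable]: "k \<in> borel_measurable M" unfolding k_def by simp
  have kF[measurable]: "k \<in> borel_measurable F" unfolding k_def by simp
  have gM[measurable]: "g \<in> borel_measurable M" unfolding g_def by simp
  have uM[measurable]: "u \<in> borel_measurable M" unfolding u_def by simp
  have eM[measurable]: "e \<in> borel_measurable M" unfolding e_def by simp
  have h2': "integrable M (\<lambda>z. (h z)\<^sup>2)" using h2 by (simp add: h_def)
  have u2': "integrable M (\<lambda>z. (u z)\<^sup>2)" using u2 by (simp add: u_def)
  have hi: "integrable M h" by (rule square_integrable_imp_integrable[OF hM h2'])
  have ui: "integrable M u" by (rule square_integrable_imp_integrable[OF uM u2'])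
  have kg: "AE z in M. k z = g z"
  proof -
    have "integrable M (\<lambda>z. Y z * R z)" using hi by (simp add: h_def mult.commute)
    from S.real_cond_exp_mult[OF YF RM this]
    have "AE z in M. real_cond_exp M F (\<lambda>z. Y z * R z) z = Y z * wt z" by (simp add: wt_def)
    moreover have "(\<lambda>z. Y z * R z) = h" by (simp add: h_def mult.commute fun_eq_iff)
    ultimately show ?thesis by (simp add: k_def g_def mult.commute)
  qed
  have ki: "integrable M k" unfolding k_def by (rule S.real_cond_exp_int(1)[OF hi])
  have kint: "(\<integral>z. k z \<partial>M) = (\<integral>z. h z \<partial>M)" unfolding k_def by (rule S.real_cond_exp_int(2)[OF hi])
  have k2: "integrable M (\<lambda>z. (k z)\<^sup>2)"
  proof (rule Bochner_Integration.integrable_bound)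
    show "integrable M (real_cond_exp M F (\<lambda>z. (h z)\<^sup>2))" by (rule S.real_cond_exp_int(1)[OF h2'])
    have J: "AE z in M. (real_cond_exp M F h z)\<^sup>2 \<le> real_cond_exp M F (\<lambda>z. (h z)\<^sup>2) z"
      by (rule S.real_cond_exp_jensens_inequality(2)[of h UNIV 0 0 power2])
         (use hi h2' convex_power2 in auto)
    then show "AE z in M. norm ((k z)\<^sup>2) \<le> norm (real_cond_exp M F (\<lambda>z. (h z)\<^sup>2) z)"
      by eventually_elim (auto simp: k_def)
  qed simp
  have g2: "integrable M (\<lambda>z. (g z)\<^sup>2)"
  proof -
    have "AE z in M. (k z)\<^sup>2 = (g z)\<^sup>2" using kg by eventually_elim simp
    from integrable_cong_AE_imp[OF k2 _ this] show ?thesis by simp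
  qed
  have gi: "integrable M g" by (rule square_integrable_imp_integrable[OF gM g2])
  have gint: "(\<integral>z. g z \<partial>M) = (\<integral>z. h z \<partial>M)"
    using kint integral_cong_AE[OF kM gM kg] by simp
  have ug: "integrable M (\<lambda>z. u z * g z)" by (rule L2_prod) (use u2' g2 in auto)
  have gh: "integrable M (\<lambda>z. g z * h z)" by (rule L2_prod) (use h2' g2 in auto)
  have kh: "integrable M (\<lambda>z. k z * h z)" by (rule L2_prod) (use h2' k2 in auto)
  have gg: "integrable M (\<lambda>z. g z * g z)" using g2 by (simp add: power2_eq_square)
  have ghint: "(\<integral>z. g z * h z \<partial>M) = (\<integral>z. (g z)\<^sup>2 \<partial>M)"
  proof -
    have "(\<integral>z. k z * h z \<partial>M) = (\<integral>z. k z * k z \<partial>M)"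
      using S.real_cond_exp_intg(2)[OF kh kF hM] by (simp add: k_def)
    moreover have "(\<integral>z. k z * h z \<partial>M) = (\<integral>z. g z * h z \<partial>M)"
      by (rule integral_cong_AE) (use kg in auto)
    moreover have "(\<integral>z. k z * k z \<partial>M) = (\<integral>z. (g z)\<^sup>2 \<partial>M)"
      by (rule integral_cong_AE) (use kg in \<open>auto simp: power2_eq_square\<close>)
    ultimately show ?thesis by simp
  qed
  have e_eq: "e = (\<lambda>z. u z - g z)" by (simp add: e_def u_def g_def fun_eq_iff algebra_simps)
  have ei: "integrable M e" unfolding e_eq using ui gi by simp
  have e2: "integrable M (\<lambda>z. (e z)\<^sup>2)"
  proof -
    have "(\<lambda>z. (e z)\<^sup>2) = (\<lambda>z. (u z)\<^sup>2 + (g z)\<^sup>2 - 2 * (u z * g z))"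
      by (simp add: e_eq fun_eq_iff power2_diff mult.assoc)
    then show ?thesis using u2' g2 ug by simp
  qed
  have eint: "(\<integral>z. e z \<partial>M) = (\<integral>z. u z \<partial>M) - (\<integral>z. h z \<partial>M)"
    unfolding e_eq using ui gi gint by simp
  then show "(\<integral>z. (W z - real_cond_exp M F R z) * Y z \<partial>M) = (\<integral>z. W z * Y z \<partial>M) - (\<integral>z. R z * Y z \<partial>M)"
    by (simp add: e_def u_def h_def wt_def)
  have e2int: "(\<integral>z. (e z)\<^sup>2 \<partial>M) = (\<integral>z. (u z)\<^sup>2 \<partial>M) - 2 * (\<integral>z. u z * g z \<partial>M) + (\<integral>z. (g z)\<^sup>2 \<partial>M)"
  proof -
    have "(\<integral>z. (e z)\<^sup>2 \<partial>M) = (\<integral>z. (u z)\<^sup>2 - 2 * (u z * g z) + (g z)\<^sup>2 \<partial>M)"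
      by (rule Bochner_Integration.integral_cong) (simp_all add: e_eq power2_diff algebra_simps)
    also have "\<dots> = (\<integral>z. (u z)\<^sup>2 \<partial>M) - 2 * (\<integral>z. u z * g z \<partial>M) + (\<integral>z. (g z)\<^sup>2 \<partial>M)"
      using u2' g2 ug by simp
    finally show ?thesis .
  qed
  have ge: "integrable M (\<lambda>z. g z * e z)" by (rule L2_prod) (use e2 g2 in auto)
  have geint: "(\<integral>z. g z * e z \<partial>M) = (\<integral>z. u z * g z \<partial>M) - (\<integral>z. (g z)\<^sup>2 \<partial>M)"
  proof -
    have "(\<integral>z. g z * e z \<partial>M) = (\<integral>z. u z * g z - (g z)\<^sup>2 \<partial>M)"
      by (rule Bochner_Integration.integral_cong) (simp_all add: e_eq power2_eq_square algebra_simps)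
    also have "\<dots> = (\<integral>z. u z * g z \<partial>M) - (\<integral>z. (g z)\<^sup>2 \<partial>M)"
      using g2 ug by simp
    finally show ?thesis .
  qed
  have cv: "(\<integral>z. cond_var_of M F h z \<partial>M) = (\<integral>z. (h z)\<^sup>2 \<partial>M) - (\<integral>z. (g z)\<^sup>2 \<partial>M)"
  proof -
    have hk2: "integrable M (\<lambda>z. (h z - k z)\<^sup>2)"
    proof -
      have "(\<lambda>z. (h z - k z)\<^sup>2) = (\<lambda>z. (h z)\<^sup>2 + (k z)\<^sup>2 - 2 * (k z * h z))"
        by (simp add: fun_eq_iff power2_diff algebra_simps)
      then show ?thesis using h2' k2 kh by simp
    qed
    have "(\<integral>z. cond_var_of M F h z \<partial>M) = (\<integral>z. (h z - k z)\<^sup>2 \<partial>M)"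
      unfolding cond_var_of_def k_def[symmetric] by (rule S.real_cond_exp_int(2)[OF hk2])
    also have "\<dots> = (\<integral>z. (h z - g z)\<^sup>2 \<partial>M)"
      by (rule integral_cong_AE) (use kg in auto)
    also have "\<dots> = (\<integral>z. (h z)\<^sup>2 - 2 * (g z * h z) + (g z)\<^sup>2 \<partial>M)"
      by (rule Bochner_Integration.integral_cong) (simp_all add: power2_diff algebra_simps)
    also have "\<dots> = (\<integral>z. (h z)\<^sup>2 \<partial>M) - 2 * (\<integral>z. g z * h z \<partial>M) + (\<integral>z. (g z)\<^sup>2 \<partial>M)"
      using h2' g2 gh by simp
    finally show ?thesis using ghint by simp
  qed
  have vh: "var_of M h = (\<integral>z. (h z)\<^sup>2 \<partial>M) - (\<integral>z. h z \<partial>M)\<^sup>2" by (rule var_alt[OF pM hM h2'])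
  have vu: "var_of M u = (\<integral>z. (u z)\<^sup>2 \<partial>M) - (\<integral>z. u z \<partial>M)\<^sup>2" by (rule var_alt[OF pM uM u2'])
  have ve: "var_of M e = (\<integral>z. (e z)\<^sup>2 \<partial>M) - (\<integral>z. e z \<partial>M)\<^sup>2" by (rule var_alt[OF pM eM e2])
  have cge: "cov_of M g e = (\<integral>z. g z * e z \<partial>M) - (\<integral>z. g z \<partial>M) * (\<integral>z. e z \<partial>M)"
    by (rule cov_alt[OF pM gM eM g2 e2])
  have "var_of M h - var_of M u = (\<integral>z. cond_var_of M F h z \<partial>M) - var_of M e - 2 * cov_of M g e"
    unfolding vh vu ve cge cv e2int geint eint gint
    by (simp add: power2_eq_square algebra_simps)
  then show "var_of M (\<lambda>z. R z * Y z) - var_of M (\<lambda>z. W z * Y z)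
         = (\<integral>z. cond_var_of M F (\<lambda>z. R z * Y z) z \<partial>M)
           - var_of M (\<lambda>z. (W z - real_cond_exp M F R z) * Y z)
           - 2 * cov_of M (\<lambda>z. real_cond_exp M F R z * Y z) (\<lambda>z. (W z - real_cond_exp M F R z) * Y z)"
    by (simp add: h_def u_def e_def g_def wt_def)
qed

theorem proposition2p6:
  fixes MX :: "'x measure" and MA :: "'a measure"
    and px :: "'x \<Rightarrow> real" and py :: "'x \<Rightarrow> 'a \<Rightarrow> real \<Rightarrow> real"
    and pib pis :: "'a \<Rightarrow> 'x \<Rightarrow> real"
    and rho :: "'a \<Rightarrow> 'x \<Rightarrow> real" and w :: "real \<Rightarrow> real"
    and n :: nat
  defines "Mb \<equiv> pol_measure MX MA px py pib"
      and "Ms \<equiv> pol_measure MX MA px py pis"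
      and "FY \<equiv> vimage_algebra (space (pol_measure MX MA px py pib)) (\<lambda>z. snd (snd z)) borel"
      and "P \<equiv> PiM {..<n} (\<lambda>_. (pol_measure MX MA px py pib))"
      and "th_ipw \<equiv> (\<lambda>s. (\<Sum>i<n. rho (fst (snd (s i))) (fst (s i)) * snd (snd (s i))) / real n)"
      and "th_mr \<equiv> (\<lambda>s. (\<Sum>i<n. w (snd (snd (s i))) * snd (snd (s i))) / real n)"
      and "wt \<equiv> real_cond_exp (pol_measure MX MA px py pib) (vimage_algebra (space (pol_measure MX MA px py pib)) (\<lambda>z. snd (snd z)) borel) (\<lambda>z. rho (fst (snd z)) (fst z))"
      and "eps \<equiv> (\<lambda>z. w (snd (snd z)) - real_cond_exp (pol_measure MX MA px py pib) (vimage_algebra (space (pol_measure MX MA px py pib)) (\<lambda>z. snd (snd z)) borel) (\<lambda>z. rho (fst (snd z)) (fst z)) z)"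
  assumes sfX: "sigma_finite_measure MX" and sfA: "sigma_finite_measure MA"
    and px_meas: "px \<in> borel_measurable MX"
    and px_nn: "\<And>x. x \<in> space MX \<Longrightarrow> px x \<ge> 0"
    and px_norm: "(\<integral>\<^sup>+ x. ennreal (px x) \<partial>MX) = 1"
    and py_meas: "(\<lambda>(x, a, y). py x a y) \<in> borel_measurable (MX \<Otimes>\<^sub>M MA \<Otimes>\<^sub>M borel)"
    and py_nn: "\<And>x a y. x \<in> space MX \<Longrightarrow> a \<in> space MA \<Longrightarrow> py x a y \<ge> 0"
    and py_norm: "\<And>x a. x \<in> space MX \<Longrightarrow> a \<in> space MA \<Longrightarrow> (\<integral>\<^sup>+ y. ennreal (py x a y) \<partial>lborel) = 1"
    and pib_meas: "(\<lambda>(a, x). pib a x) \<in> borel_measurable (MA \<Otimes>\<^sub>M MX)"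
    and pis_meas: "(\<lambda>(a, x). pis a x) \<in> borel_measurable (MA \<Otimes>\<^sub>M MX)"
    and pib_nn: "\<And>a x. a \<in> space MA \<Longrightarrow> x \<in> space MX \<Longrightarrow> pib a x \<ge> 0"
    and pis_nn: "\<And>a x. a \<in> space MA \<Longrightarrow> x \<in> space MX \<Longrightarrow> pis a x \<ge> 0"
    and pib_norm: "\<And>x. x \<in> space MX \<Longrightarrow> (\<integral>\<^sup>+ a. ennreal (pib a x) \<partial>MA) = 1"
    and pis_norm: "\<And>x. x \<in> space MX \<Longrightarrow> (\<integral>\<^sup>+ a. ennreal (pis a x) \<partial>MA) = 1"
    and supp: "\<And>a x. a \<in> space MA \<Longrightarrow> x \<in> space MX \<Longrightarrow> pis a x > 0 \<Longrightarrow> pib a x > 0"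
    and rho_meas: "(\<lambda>(a, x). rho a x) \<in> borel_measurable (MA \<Otimes>\<^sub>M MX)"
    and w_meas: "w \<in> borel_measurable borel"
    and rho_int: "integrable Mb (\<lambda>z. rho (fst (snd z)) (fst z))"
    and rhoY_sq: "integrable Mb (\<lambda>z. (rho (fst (snd z)) (fst z) * snd (snd z))\<^sup>2)"
    and wY_sq: "integrable Mb (\<lambda>z. (w (snd (snd z)) * snd (snd z))\<^sup>2)"
    and n_pos: "n > 0"
  shows "(((\<integral>s. th_mr s \<partial>P) - (\<integral>z. snd (snd z) \<partial>Ms))
           - ((\<integral>s. th_ipw s \<partial>P) - (\<integral>z. snd (snd z) \<partial>Ms))
         = (\<integral>z. eps z * snd (snd z) \<partial>Mb))
    \<and> (var_of P th_ipw - var_of P th_mr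
         = (1 / real n) *
           ((\<integral>z. cond_var_of Mb FY (\<lambda>z. rho (fst (snd z)) (fst z) * snd (snd z)) z \<partial>Mb)
            - var_of Mb (\<lambda>z. eps z * snd (snd z))
            - 2 * cov_of Mb (\<lambda>z. wt z * snd (snd z)) (\<lambda>z. eps z * snd (snd z))))"
proof -
  have pMb: "prob_space Mb" unfolding Mb_def
    by (rule pol_prob[OF sfX sfA px_meas px_nn px_norm py_meas py_nn py_norm pib_meas pib_nn pib_norm])
  have setsMb: "sets Mb = sets (MX \<Otimes>\<^sub>M MA \<Otimes>\<^sub>M lborel)"
    unfolding Mb_def pol_measure_def by simp
  have YM: "(\<lambda>z. snd (snd z)) \<in> borel_measurable Mb"
    by (subst measurable_cong_sets[OF setsMb refl]) measurable
  have RM: "(\<lambda>z. rho (fst (snd z)) (fst z)) \<in> borel_measurable Mb"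
  proof -
    have "(\<lambda>z. (fst (snd z), fst z)) \<in> measurable Mb (MA \<Otimes>\<^sub>M MX)"
      by (subst measurable_cong_sets[OF setsMb refl]) measurable
    from measurable_comp[OF this rho_meas] show ?thesis by (simp add: o_def)
  qed
  have FY': "FY = vimage_algebra (space Mb) (\<lambda>z. snd (snd z)) borel"
    unfolding FY_def Mb_def ..
  have YF: "(\<lambda>z. snd (snd z)) \<in> borel_measurable FY"
    unfolding FY' by (rule measurable_vimage_algebra1) simp
  have WF: "(\<lambda>z. w (snd (snd z))) \<in> borel_measurable FY"
    using measurable_compose[OF YF w_meas] .
  have sub: "subalgebra Mb FY"
    unfolding subalgebra_def FY'
  proof
    show "sets (vimage_algebra (space Mb) (\<lambda>z. snd (snd z)) borel) \<subseteq> sets Mb"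
      using YM by (subst sets_vimage_algebra2) (auto simp: measurable_sets)
  qed simp
  note D = cond_part[OF pMb sub YF WF RM, OF rhoY_sq wY_sq]
  have RY: "(\<lambda>z. rho (fst (snd z)) (fst z) * snd (snd z)) \<in> borel_measurable Mb"
    using RM YM by measurable
  have WY: "(\<lambda>z. w (snd (snd z)) * snd (snd z)) \<in> borel_measurable Mb"
    using measurable_from_subalg[OF sub WF] YM by measurable
  note B1 = iid_mean_var[OF pMb RY rhoY_sq n_pos]
  note B2 = iid_mean_var[OF pMb WY wY_sq n_pos]
  have P': "P = PiM {..<n} (\<lambda>_. Mb)" unfolding P_def Mb_def ..
  have wt': "wt = real_cond_exp Mb FY (\<lambda>z. rho (fst (snd z)) (fst z))"
    unfolding wt_def Mb_def FY_def ..
  have eps': "eps = (\<lambda>z. w (snd (snd z)) - real_cond_exp Mb FY (\<lambda>z. rho (fst (snd z)) (fst z)) z)"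
    unfolding eps_def Mb_def FY_def ..
  show ?thesis
    unfolding P' wt' eps' th_ipw_def th_mr_def B1 B2
    apply (rule conjI)
    using D(1) apply simp
    unfolding diff_divide_distrib[symmetric] D(2) by simp
qed

end
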